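(* Let $k$ be an infinite field, $n\ge2$, and let $<$ be a product order on $k[X_1,\ldots,X_n]$ with $X_1<\cdots<X_n$. Let $A\subseteq k^n$ be a finite union of pairwise distinct affine $d$-planes such that for each irreducible component $A'$ of $A$, the index $1$ is not among the indices of the minimal free variables of $A'$ (equivalently, $X_1$ is constant on each component). Let $Y=\{a_1;\ a\in A\}\subseteq k$ (a finite set), and for $\lambda\in Y$ let $A_\lambda=\{a'\in k^{n-1};\ (\lambda,a')\in A\}$ and $D(A_\lambda)\subseteq\mathbb{N}^{n-1}$ its standard set with respect to the restriction of $<$ to $k[X_2,\ldots,X_n]$, identified with $\{0\}\times D(A_\lambda)\subseteq\mathbb{N}^n$. Then $$D(A)=\sum_{\lambda\in Y}D(A_\lambda),$$ i.e. $D(A)=\{\beta\in\mathbb{N}^n;\ \beta_1<\#\{\lambda\in Y;\ p(\beta)\in D(A_\lambda)\}\}$.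
   Context: $p:\mathbb{N}^n\to\mathbb{N}^{n-1}$, $(\alpha_1,\ldots,\alpha_n)\mapsto(\alpha_2,\ldots,\alpha_n)$. A term order $<$ on $k[X_1,\ldots,X_n]$ is a product order if for all $\alpha,\beta\in\mathbb{N}^n$: $\alpha<\beta$ iff either $p(\alpha)<p(\beta)$, or $p(\alpha)=p(\beta)$ and $\alpha_1<\beta_1$. For $A\subseteq k^m$, $I(A)$ is the ideal of polynomials vanishing on $A$, ${\rm LE}(f)$ the leading exponent, $C(A)=\{{\rm LE}(f);\ 0\ne f\in I(A)\}$, and $D(A)=\mathbb{N}^m\setminus C(A)$. Addition of standard sets: let $\overline{\mathbb{D}}_n$ be the set of subsets $\delta\subseteq\mathbb{N}^n$ whose complement is closed under adding elements of $\mathbb{N}^n$ and which do not contain $\mathbb{N}e_1$; for $\delta,\delta'\in\overline{\mathbb{D}}_n$, $\delta+\delta'=\{\beta\in\mathbb{N}^n;\ p(\beta)\in p(\delta)\cup p(\delta'),\ \beta_1<\#(p^{-1}(p(\beta))\cap\delta)+\#(p^{-1}(p(\beta))\cap\delta')\}$; this is commutative and associative, so finite sums are defined; for sets of the form $\{0\}\times\epsilon_\lambda$ the finite sum equals $\{\beta;\ \beta_1<\#\{\lambda;\ p(\beta)\in\epsilon_\lambda\}\}$. An affine $d$-plane is a translate of a $d$-dimensional linear subspace; for $\#J=d$, $\{X_j;\ j\in J\}$ is a set of free variables of an affine $d$-plane $A'$ if the projection $A'\to k^J$ is bijective, and minimal if moreover no exchange of some $j\in J$ by some $i\notin J$ with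 $i<j$ yields a set of free variables. *)

theory Defs
  imports Main
begin

text \<open>Conventions: indices are 0-based (paper index 1 is index 0).
  Exponent vectors in N^m are functions nat => nat vanishing outside {..<m};
  points of k^m are functions nat => 'a vanishing outside {..<m};
  polynomials in k[X_1..X_m] are finitely supported coefficient functions
  on N^m.\<close>

definition expn :: "nat \<Rightarrow> (nat \<Rightarrow> nat) set" where
  "expn m = {\<alpha>. \<forall>i\<ge>m. \<alpha> i = 0}"

definition kvec :: "nat \<Rightarrow> (nat \<Rightarrow> 'a::zero) set" where
  "kvec m = {a. \<forall>i\<ge>m. a i = 0}"

definition polys :: "nat \<Rightarrow> ((nat \<Rightarrow> nat) \<Rightarrow> 'a::zero) set" where
  "polys m = {f. finite {\<alpha>. f \<alpha> \<noteq> 0} \<and> {\<alpha>. f \<alpha> \<noteq> 0} \<subseteq> expn m}"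

definition peval :: "nat \<Rightarrow> ((nat \<Rightarrow> nat) \<Rightarrow> 'a::comm_ring_1) \<Rightarrow> (nat \<Rightarrow> 'a) \<Rightarrow> 'a" where
  "peval m f a = (\<Sum>\<alpha>\<in>{\<alpha>. f \<alpha> \<noteq> 0}. f \<alpha> * (\<Prod>i<m. a i ^ \<alpha> i))"

definition unitv :: "nat \<Rightarrow> nat \<Rightarrow> nat" where
  "unitv i = (\<lambda>j. if j = i then 1 else 0)"

definition term_order :: "nat \<Rightarrow> ((nat \<Rightarrow> nat) \<Rightarrow> (nat \<Rightarrow> nat) \<Rightarrow> bool) \<Rightarrow> bool" where
  "term_order m lt \<longleftrightarrow>
     (\<forall>\<alpha>\<in>expn m. \<not> lt \<alpha> \<alpha>) \<and>
     (\<forall>\<alpha>\<in>expn m. \<forall>\<beta>\<in>expn m. \<forall>\<gamma>\<in>expn m. lt \<alpha> \<beta> \<longrightarrow> lt \<beta> \<gamma> \<longrightarrow> lt \<alpha> \<gamma>) \<and>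
     (\<forall>\<alpha>\<in>expn m. \<forall>\<beta>\<in>expn m. \<alpha> \<noteq> \<beta> \<longrightarrow> lt \<alpha> \<beta> \<or> lt \<beta> \<alpha>) \<and>
     (\<forall>\<alpha>\<in>expn m. \<forall>\<beta>\<in>expn m. \<forall>\<gamma>\<in>expn m.
        lt \<alpha> \<beta> \<longrightarrow> lt (\<lambda>i. \<alpha> i + \<gamma> i) (\<lambda>i. \<beta> i + \<gamma> i)) \<and>
     (\<forall>\<alpha>\<in>expn m. \<alpha> \<noteq> (\<lambda>_. 0) \<longrightarrow> lt (\<lambda>_. 0) \<alpha>)"

definition pdrop :: "(nat \<Rightarrow> 'b) \<Rightarrow> (nat \<Rightarrow> 'b)" where
  "pdrop \<alpha> = (\<lambda>i. \<alpha> (Suc i))"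

definition shift0 :: "(nat \<Rightarrow> nat) \<Rightarrow> (nat \<Rightarrow> nat)" where
  "shift0 \<gamma> = (\<lambda>i. if i = 0 then 0 else \<gamma> (i - 1))"

definition restr_order :: "((nat \<Rightarrow> nat) \<Rightarrow> (nat \<Rightarrow> nat) \<Rightarrow> bool) \<Rightarrow> (nat \<Rightarrow> nat) \<Rightarrow> (nat \<Rightarrow> nat) \<Rightarrow> bool" where
  "restr_order lt \<gamma> \<delta> \<longleftrightarrow> lt (shift0 \<gamma>) (shift0 \<delta>)"

definition product_order :: "nat \<Rightarrow> ((nat \<Rightarrow> nat) \<Rightarrow> (nat \<Rightarrow> nat) \<Rightarrow> bool) \<Rightarrow> bool" where
  "product_order n lt \<longleftrightarrow> term_order n lt \<and>
     (\<forall>\<alpha>\<in>expn n. \<forall>\<beta>\<in>expn n. lt \<alpha> \<beta> \<longleftrightarrow>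
        (restr_order lt (pdrop \<alpha>) (pdrop \<beta>) \<or> (pdrop \<alpha> = pdrop \<beta> \<and> \<alpha> 0 < \<beta> 0)))"

definition LE :: "((nat \<Rightarrow> nat) \<Rightarrow> (nat \<Rightarrow> nat) \<Rightarrow> bool) \<Rightarrow> ((nat \<Rightarrow> nat) \<Rightarrow> 'a::zero) \<Rightarrow> nat \<Rightarrow> nat" where
  "LE lt f = (THE \<alpha>. f \<alpha> \<noteq> 0 \<and> (\<forall>\<beta>. f \<beta> \<noteq> 0 \<longrightarrow> \<beta> = \<alpha> \<or> lt \<beta> \<alpha>))"

definition vanishing_ideal :: "nat \<Rightarrow> (nat \<Rightarrow> 'a::comm_ring_1) set \<Rightarrow> ((nat \<Rightarrow> nat) \<Rightarrow> 'a) set" where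
  "vanishing_ideal m A = {f \<in> polys m. \<forall>a\<in>A. peval m f a = 0}"

definition Cset :: "nat \<Rightarrow> ((nat \<Rightarrow> nat) \<Rightarrow> (nat \<Rightarrow> nat) \<Rightarrow> bool) \<Rightarrow> (nat \<Rightarrow> 'a::comm_ring_1) set \<Rightarrow> (nat \<Rightarrow> nat) set" where
  "Cset m lt A = {LE lt f | f. f \<in> vanishing_ideal m A \<and> f \<noteq> (\<lambda>_. 0)}"

definition Dset :: "nat \<Rightarrow> ((nat \<Rightarrow> nat) \<Rightarrow> (nat \<Rightarrow> nat) \<Rightarrow> bool) \<Rightarrow> (nat \<Rightarrow> 'a::comm_ring_1) set \<Rightarrow> (nat \<Rightarrow> nat) set" where
  "Dset m lt A = expn m - Cset m lt A"

definition affine_plane :: "nat \<Rightarrow> nat \<Rightarrow> (nat \<Rightarrow> 'a::field) set \<Rightarrow> bool" where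
  "affine_plane n d P \<longleftrightarrow> (\<exists>b w. b \<in> kvec n \<and> (\<forall>j<d. w j \<in> kvec n) \<and>
     (\<forall>t. (\<forall>i. (\<Sum>j<d. t j * w j i) = 0) \<longrightarrow> (\<forall>j<d. t j = 0)) \<and>
     P = {(\<lambda>i. b i + (\<Sum>j<d. t j * w j i)) | t. True})"

definition free_vars :: "nat \<Rightarrow> nat \<Rightarrow> (nat \<Rightarrow> 'a::field) set \<Rightarrow> nat set \<Rightarrow> bool" where
  "free_vars n d P J \<longleftrightarrow> J \<subseteq> {..<n} \<and> card J = d \<and>
     bij_betw (\<lambda>a i. if i \<in> J then a i else 0) P {c. \<forall>i. i \<notin> J \<longrightarrow> c i = 0}"

definition minimal_free_vars :: "nat \<Rightarrow> nat \<Rightarrow> (nat \<Rightarrow> 'a::field) set \<Rightarrow> nat set \<Rightarrow> bool" where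
  "minimal_free_vars n d P J \<longleftrightarrow> free_vars n d P J \<and>
     \<not> (\<exists>j\<in>J. \<exists>i\<in>{..<n} - J. i < j \<and> free_vars n d P (insert i (J - {j})))"

end

theory Submission
  imports Defs "HOL-Computational_Algebra.Polynomial"
begin


definition indep :: "nat \<Rightarrow> (nat \<Rightarrow> nat \<Rightarrow> 'a::field) \<Rightarrow> bool" where
  "indep d w \<longleftrightarrow> (\<forall>t. (\<forall>i. (\<Sum>j<d. t j * w j i) = 0) \<longrightarrow> (\<forall>j<d. t j = 0))"

definition sig :: "nat \<Rightarrow> nat \<Rightarrow> nat" where
  "sig j0 j = (if j < j0 then j else Suc j)"

lemma sig_inj: "inj (sig j0)"
  unfolding inj_def sig_def by auto

lemma sig_img: "j0 < Suc d \<Longrightarrow> {..<Suc d} = insert j0 (sig j0 ` {..<d})"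
proof (rule set_eqI, rule iffI)
  fix x assume "j0 < Suc d" "x \<in> {..<Suc d}"
  then show "x \<in> insert j0 (sig j0 ` {..<d})"
  proof (cases "x < j0")
    case True then show ?thesis using \<open>j0 < Suc d\<close> by (auto simp: sig_def image_iff intro!: bexI[of _ x])
  next
    case False
    show ?thesis
    proof (cases "x = j0")
      case False
      with \<open>\<not> x < j0\<close> have "x = sig j0 (x - 1)" "x - 1 < d" using \<open>x \<in> {..<Suc d}\<close> by (auto simp: sig_def)
      then show ?thesis by blast
    qed simp
  qed
qed (auto simp: sig_def)

lemma sum_split_sig:
  assumes "j0 < Suc d"
  shows "(\<Sum>j<Suc d. h j) = h j0 + (\<Sum>j<d. h (sig j0 j))"
proof -
  have "j0 \<notin> sig j0 ` {..<d}" by (auto simp: sig_def)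
  then have "(\<Sum>j<Suc d. h j) = h j0 + sum h (sig j0 ` {..<d})"
    by (simp add: sig_img[OF assms])
  also have "sum h (sig j0 ` {..<d}) = (\<Sum>j<d. h (sig j0 j))"
    by (subst sum.reindex) (auto intro: inj_on_subset[OF sig_inj])
  finally show ?thesis .
qed

definition tof :: "nat \<Rightarrow> 'a \<Rightarrow> (nat \<Rightarrow> 'a) \<Rightarrow> nat \<Rightarrow> 'a" where
  "tof j0 \<tau> s j = (if j < j0 then s j else if j = j0 then \<tau> else s (j - 1))"

lemma tof_sig[simp]: "tof j0 \<tau> s (sig j0 j) = s j"
  by (auto simp: tof_def sig_def)
lemma tof_j0[simp]: "tof j0 \<tau> s j0 = \<tau>"
  by (auto simp: tof_def)

lemma lin_solve:
  fixes w :: "nat \<Rightarrow> nat \<Rightarrow> 'a::field"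
  assumes "\<forall>j<d. w j \<in> kvec n" "indep d w" "j0 < d" "w j0 i0 \<noteq> 0"
  shows "\<exists>J. J \<subseteq> {..<n} \<and> card J = d \<and> i0 \<in> J \<and>
     (\<forall>c. \<exists>t. \<forall>i\<in>J. (\<Sum>j<d. t j * w j i) = c i) \<and>
     (\<forall>t. (\<forall>i\<in>J. (\<Sum>j<d. t j * w j i) = 0) \<longrightarrow> (\<forall>j<d. t j = 0))"
  using assms
proof (induction d arbitrary: w j0 i0)
  case 0
  then show ?case by simp
next
  case (Suc d)
  define a where "a = w j0 i0"
  have a0: "a \<noteq> 0" using Suc.prems a_def by simp
  have i0n: "i0 < n"
  proof (rule ccontr)
    assume "\<not> i0 < n"
    then have "w j0 i0 = 0" using Suc.prems(1,3) unfolding kvec_def by auto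
    then show False using Suc.prems(4) by simp
  qed
  define v where "v j i = w (sig j0 j) i - (w (sig j0 j) i0 / a) * w j0 i" for j i
  define K where "K s = (\<Sum>j<d. s j * w (sig j0 j) i0) / a" for s
  have sumv: "(\<Sum>j<d. s j * v j i) = (\<Sum>j<d. s j * w (sig j0 j) i) - K s * w j0 i" for s i
    by (simp add: v_def K_def right_diff_distrib sum_subtractf sum_distrib_left sum_distrib_right sum_divide_distrib algebra_simps)
  have sumt: "(\<Sum>j<Suc d. t j * w j i) = t j0 * w j0 i + (\<Sum>j<d. t (sig j0 j) * w (sig j0 j) i)" for t i
    using sum_split_sig[OF Suc.prems(3), of "\<lambda>j. t j * w j i"] by simp
  have vi0: "v j i0 = 0" for j using a0 by (simp add: v_def a_def)
  have Ka: "K s * a = (\<Sum>j<d. s j * w (sig j0 j) i0)" for s using a0 by (simp add: K_def)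
  have vk: "\<forall>j<d. v j \<in> kvec n"
  proof (intro allI impI)
    fix j assume "j < d"
    then have "sig j0 j < Suc d" by (auto simp: sig_def)
    then show "v j \<in> kvec n" using Suc.prems(1,3) unfolding kvec_def v_def by auto
  qed
  have vind: "indep d v"
    unfolding indep_def
  proof (intro allI impI)
    fix s j assume h: "\<forall>i. (\<Sum>j<d. s j * v j i) = 0" and j: "j < d"
    define t where "t = tof j0 (- K s) s"
    have "\<forall>i. (\<Sum>j<Suc d. t j * w j i) = 0"
    proof
      fix i
      have "(\<Sum>j<Suc d. t j * w j i) = - K s * w j0 i + (\<Sum>j<d. s j * w (sig j0 j) i)"
        by (simp only: sumt) (simp add: t_def)
      also have "\<dots> = (\<Sum>j<d. s j * v j i)" by (simp add: sumv)
      finally show "(\<Sum>j<Suc d. t j * w j i) = 0" using h by simp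
    qed
    then have "\<forall>j<Suc d. t j = 0" using Suc.prems(2) unfolding indep_def by blast
    moreover have "sig j0 j < Suc d" using j by (auto simp: sig_def)
    ultimately show "s j = 0" by (metis t_def tof_sig)
  qed
  show ?case
  proof (cases "d = 0")
    case True
    then have j00: "j0 = 0" using Suc.prems(3) by simp
    show ?thesis
    proof (intro exI[of _ "{i0}"] conjI allI impI)
      show "{i0} \<subseteq> {..<n}" using i0n by simp
      fix c show "\<exists>t. \<forall>i\<in>{i0}. (\<Sum>j<Suc d. t j * w j i) = c i"
        using a0 True j00 by (intro exI[of _ "\<lambda>_. c i0 / a"]) (simp add: a_def)
    next
      fix t j assume "\<forall>i\<in>{i0}. (\<Sum>j<Suc d. t j * w j i) = 0" "j < Suc d"
      then show "t j = 0" using a0 True j00 by (simp add: a_def)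
    qed (use True in auto)
  next
    case False
    have "\<exists>i1. v 0 i1 \<noteq> 0"
    proof (rule ccontr)
      assume "\<not> ?thesis"
      then have v00: "\<forall>i. v 0 i = 0" by blast
      have "\<forall>i. (\<Sum>j<d. (if j = 0 then 1 else 0) * v j i) = 0"
      proof
        fix i
        have "(\<Sum>j<d. (if j = 0 then 1 else 0) * v j i) = (\<Sum>j<d. (if j = 0 then v j i else 0))"
          by (rule sum.cong) auto
        also have "\<dots> = v 0 i" using False by (simp add: sum.delta)
        finally show "(\<Sum>j<d. (if j = 0 then 1 else 0) * v j i) = 0" using v00 by simp
      qed
      then have "\<forall>j<d. (if j = 0 then 1 else 0 :: 'a) = 0"
        using vind[unfolded indep_def, rule_format, of "\<lambda>j. if j = 0 then 1 else 0"] by blast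
      then show False using False by auto
    qed
    then obtain i1 where i1: "v 0 i1 \<noteq> 0" by blast
    obtain J' where J': "J' \<subseteq> {..<n}" "card J' = d" "i1 \<in> J'"
      "\<forall>c. \<exists>t. \<forall>i\<in>J'. (\<Sum>j<d. t j * v j i) = c i"
      "\<forall>t. (\<forall>i\<in>J'. (\<Sum>j<d. t j * v j i) = 0) \<longrightarrow> (\<forall>j<d. t j = 0)"
      using Suc.IH[OF vk vind _ i1] False by auto
    have i0J': "i0 \<notin> J'"
    proof
      assume "i0 \<in> J'"
      obtain s where "\<forall>i\<in>J'. (\<Sum>j<d. s j * v j i) = (\<lambda>_. 1) i" using J'(4)[rule_format, of "\<lambda>_. 1"] by blast
      then have "(\<Sum>j<d. s j * v j i0) = 1" using \<open>i0 \<in> J'\<close> by blast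
      then show False by (simp add: vi0)
    qed
    have finJ': "finite J'" using J'(1) finite_subset by blast
    show ?thesis
    proof (intro exI[of _ "insert i0 J'"] conjI allI impI)
      show "insert i0 J' \<subseteq> {..<n}" using J'(1) i0n by simp
      show "card (insert i0 J') = Suc d" using finJ' i0J' J'(2) by simp
      show "i0 \<in> insert i0 J'" by simp
    next
      fix c
      obtain s where s: "\<forall>i\<in>J'. (\<Sum>j<d. s j * v j i) = c i - (c i0 / a) * w j0 i"
        using J'(4)[rule_format, of "\<lambda>i. c i - (c i0 / a) * w j0 i"] by blast
      define t where "t = tof j0 (c i0 / a - K s) s"
      have "\<forall>i\<in>insert i0 J'. (\<Sum>j<Suc d. t j * w j i) = c i"
      proof
        fix i assume i: "i \<in> insert i0 J'"
        have e: "(\<Sum>j<Suc d. t j * w j i) = (c i0 / a - K s) * w j0 i + (\<Sum>j<d. s j * w (sig j0 j) i)"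
          by (simp only: sumt) (simp add: t_def)
        show "(\<Sum>j<Suc d. t j * w j i) = c i"
        proof (cases "i = i0")
          case True
          have "(c i0 / a - K s) * a + K s * a = c i0" using a0 by (simp add: algebra_simps)
          then show ?thesis using e True Ka by (simp add: a_def)
        next
          case False
          then have "i \<in> J'" using i by simp
          then have "(\<Sum>j<d. s j * w (sig j0 j) i) = c i - (c i0 / a) * w j0 i + K s * w j0 i"
            using s[rule_format, OF \<open>i \<in> J'\<close>] sumv[of s i] by (simp add: algebra_simps)
          then show ?thesis using e by (simp add: algebra_simps)
        qed
      qed
      then show "\<exists>t. \<forall>i\<in>insert i0 J'. (\<Sum>j<Suc d. t j * w j i) = c i" by blast
    next
      fix t j assume h: "\<forall>i\<in>insert i0 J'. (\<Sum>j<Suc d. t j * w j i) = 0" and j: "j < Suc d"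
      define s where "s = (\<lambda>j. t (sig j0 j))"
      have "(t j0 + K s) * a = 0" unfolding distrib_right using h[rule_format, of i0] sumt[of t i0] Ka[of s]
        by (simp add: s_def a_def)
      then have tK: "t j0 + K s = 0" using a0 by simp
      have tj0: "t j0 = - K s" using tK by (simp add: eq_neg_iff_add_eq_0)
      have "\<forall>i\<in>J'. (\<Sum>j<d. s j * v j i) = 0"
      proof
        fix i assume "i \<in> J'"
        then have "t j0 * w j0 i + (\<Sum>j<d. s j * w (sig j0 j) i) = 0" using h sumt s_def by simp
        then show "(\<Sum>j<d. s j * v j i) = 0" using tj0 by (simp add: sumv)
      qed
      then have s0: "\<forall>j<d. s j = 0" using J'(5) by blast
      then have "K s = 0" by (simp add: K_def)
      then have t0: "t j0 = 0" using tK by simp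
      show "t j = 0"
      proof (cases "j = j0")
        case False
        then have "j \<in> sig j0 ` {..<d}" using sig_img[OF Suc.prems(3)] j by auto
        then show ?thesis using s0 s_def by auto
      qed (use t0 in simp)
    qed
  qed
qed


lemma free_vars_of_solve:
  fixes w :: "nat \<Rightarrow> nat \<Rightarrow> 'a::field"
  assumes P: "P = {(\<lambda>i. b i + (\<Sum>j<d. t j * w j i)) | t. True}"
    and J: "J \<subseteq> {..<n}" "card J = d"
      "\<forall>c. \<exists>t. \<forall>i\<in>J. (\<Sum>j<d. t j * w j i) = c i"
      "\<forall>t. (\<forall>i\<in>J. (\<Sum>j<d. t j * w j i) = 0) \<longrightarrow> (\<forall>j<d. t j = 0)"
  shows "free_vars n d P J"
  unfolding free_vars_def bij_betw_def
proof (intro conjI)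
  show "J \<subseteq> {..<n}" "card J = d" using J by auto
  define pt where "pt t = (\<lambda>i. b i + (\<Sum>j<d. t j * w j i))" for t
  have P': "P = range pt" using P unfolding pt_def by auto
  show "inj_on (\<lambda>a i. if i \<in> J then a i else 0) P"
  proof (rule inj_onI)
    fix x y assume "x \<in> P" "y \<in> P" and e: "(\<lambda>i. if i \<in> J then x i else 0) = (\<lambda>i. if i \<in> J then y i else 0)"
    then obtain t1 t2 where x: "x = pt t1" and y: "y = pt t2" using P' by auto
    have "\<forall>i\<in>J. (\<Sum>j<d. (t1 j - t2 j) * w j i) = 0"
    proof
      fix i assume "i \<in> J"
      then have "x i = y i" using e by meson
      then show "(\<Sum>j<d. (t1 j - t2 j) * w j i) = 0"
        by (simp add: x y pt_def left_diff_distrib sum_subtractf)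
    qed
    then have "\<forall>j<d. t1 j - t2 j = 0" using J(4)[rule_format, of "\<lambda>j. t1 j - t2 j"] by blast
    then have "\<forall>i. (\<Sum>j<d. t1 j * w j i) = (\<Sum>j<d. t2 j * w j i)" by auto
    then show "x = y" by (simp add: x y pt_def)
  qed
  show "(\<lambda>a i. if i \<in> J then a i else 0) ` P = {c. \<forall>i. i \<notin> J \<longrightarrow> c i = 0}"
  proof (rule set_eqI, rule iffI)
    fix c assume "c \<in> (\<lambda>a i. if i \<in> J then a i else 0) ` P"
    then show "c \<in> {c. \<forall>i. i \<notin> J \<longrightarrow> c i = 0}" by auto
  next
    fix c :: "nat \<Rightarrow> 'a" assume "c \<in> {c. \<forall>i. i \<notin> J \<longrightarrow> c i = 0}"
    then have c0: "\<forall>i. i \<notin> J \<longrightarrow> c i = 0" by simp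
    obtain t where t: "\<forall>i\<in>J. (\<Sum>j<d. t j * w j i) = c i - b i"
      using J(3)[rule_format, of "\<lambda>i. c i - b i"] by blast
    have "(\<lambda>i. if i \<in> J then pt t i else 0) = c"
    proof
      fix i show "(if i \<in> J then pt t i else 0) = c i" using t c0 by (auto simp: pt_def)
    qed
    then show "c \<in> (\<lambda>a i. if i \<in> J then a i else 0) ` P" using P' by auto
  qed
qed

lemma sum_exchange_less:
  fixes J :: "nat set"
  assumes "finite J" "j \<in> J" "i \<notin> J" "i < j"
  shows "\<Sum>(insert i (J - {j})) < \<Sum>J"
proof -
  have "\<Sum>(insert i (J - {j})) = i + \<Sum>(J - {j})" using assms by simp
  also have "\<Sum>(J - {j}) + j = \<Sum>J" using assms by (simp add: sum.remove add.commute)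
  ultimately show ?thesis using assms by linarith
qed

lemma plane_const:
  fixes P :: "(nat \<Rightarrow> 'a::field) set"
  assumes "affine_plane n d P" "\<forall>J. minimal_free_vars n d P J \<longrightarrow> 0 \<notin> J"
  shows "\<exists>c. \<forall>a\<in>P. a 0 = c"
proof -
  obtain b w where bw: "b \<in> kvec n" "\<forall>j<d. w j \<in> kvec n"
     "\<forall>t. (\<forall>i. (\<Sum>j<d. t j * w j i) = 0) \<longrightarrow> (\<forall>j<d. t j = 0)"
     "P = {(\<lambda>i. b i + (\<Sum>j<d. t j * w j i)) | t. True}"
    using assms(1) unfolding affine_plane_def by blast
  show ?thesis
  proof (cases "\<forall>j<d. w j 0 = 0")
    case True
    then show ?thesis using bw(4) by (intro exI[of _ "b 0"]) auto
  next
    case False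
    then obtain j0 where j0: "j0 < d" "w j0 0 \<noteq> 0" by auto
    obtain J where J: "J \<subseteq> {..<n}" "card J = d" "0 \<in> J"
     "\<forall>c. \<exists>t. \<forall>i\<in>J. (\<Sum>j<d. t j * w j i) = c i"
     "\<forall>t. (\<forall>i\<in>J. (\<Sum>j<d. t j * w j i) = 0) \<longrightarrow> (\<forall>j<d. t j = 0)"
      using lin_solve[OF bw(2) _ j0] bw(3) unfolding indep_def by blast
    have fv: "free_vars n d P J" by (rule free_vars_of_solve[OF bw(4) J(1,2,4,5)])
    define Q where "Q J' = (free_vars n d P J' \<and> 0 \<in> J')" for J'
    obtain J0 where J0: "Q J0" "\<forall>y. Q y \<longrightarrow> \<Sum>J0 \<le> \<Sum>y"
      using ex_has_least_nat[of Q J "\<lambda>J. \<Sum>J"] fv J(3) Q_def by blast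
    have fin: "finite J0" using J0(1) unfolding Q_def free_vars_def
      by (meson finite_lessThan finite_subset)
    have "minimal_free_vars n d P J0"
      unfolding minimal_free_vars_def
    proof (intro conjI notI)
      show "free_vars n d P J0" using J0 Q_def by simp
      assume "\<exists>j\<in>J0. \<exists>i\<in>{..<n} - J0. i < j \<and> free_vars n d P (insert i (J0 - {j}))"
      then obtain j i where ji: "j \<in> J0" "i \<notin> J0" "i < j" "free_vars n d P (insert i (J0 - {j}))" by blast
      have "Q (insert i (J0 - {j}))" using ji J0(1) unfolding Q_def by auto
      then have "\<Sum>J0 \<le> \<Sum>(insert i (J0 - {j}))" using J0(2) by blast
      then show False using sum_exchange_less[OF fin ji(1,2,3)] by linarith
    qed
    then show ?thesis using assms(2) J0(1) Q_def by blast
  qed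
qed



definition pmono :: "nat \<Rightarrow> (nat \<Rightarrow> 'a::comm_ring_1) \<Rightarrow> (nat \<Rightarrow> nat) \<Rightarrow> 'a" where
  "pmono m a \<alpha> = (\<Prod>i<m. a i ^ \<alpha> i)"

definition ccons :: "'b \<Rightarrow> (nat \<Rightarrow> 'b) \<Rightarrow> nat \<Rightarrow> 'b" where
  "ccons x g = (\<lambda>i. if i = 0 then x else g (i - 1))"

lemma pdrop_ccons[simp]: "pdrop (ccons x g) = g"
  by (simp add: pdrop_def ccons_def)
lemma ccons_0[simp]: "ccons x g 0 = x"
  by (simp add: ccons_def)
lemma ccons_pdrop[simp]: "ccons (\<alpha> 0) (pdrop \<alpha>) = \<alpha>"
  by (auto simp: pdrop_def ccons_def)
lemma shift0_ccons: "shift0 = ccons 0"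
  by (auto simp: shift0_def ccons_def fun_eq_iff)
lemma ccons_inj: "ccons x g = ccons y h \<longleftrightarrow> x = y \<and> g = h"
  by (metis ccons_0 pdrop_ccons)
lemma ccons_eq_iff: "\<alpha> = ccons x g \<longleftrightarrow> \<alpha> 0 = x \<and> pdrop \<alpha> = g"
  by (metis ccons_0 ccons_pdrop pdrop_ccons)

lemma expn_Suc: "\<alpha> \<in> expn (Suc m) \<longleftrightarrow> pdrop \<alpha> \<in> expn m"
  unfolding expn_def pdrop_def
proof safe
  fix i assume "\<forall>i\<ge>m. \<alpha> (Suc i) = 0" "Suc m \<le> i"
  then show "\<alpha> i = 0" by (metis Suc_le_D Suc_le_mono)
qed auto

lemma pmono_Suc: "pmono (Suc m) a \<alpha> = a 0 ^ \<alpha> 0 * pmono m (pdrop a) (pdrop \<alpha>)"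
  unfolding pmono_def pdrop_def by (subst prod.lessThan_Suc_shift) simp

lemma peval_superset:
  assumes "finite F" "{\<alpha>. f \<alpha> \<noteq> 0} \<subseteq> F"
  shows "peval m f a = (\<Sum>\<alpha>\<in>F. f \<alpha> * pmono m a \<alpha>)"
  unfolding peval_def pmono_def
  by (rule sum.mono_neutral_left) (use assms in auto)

lemma polys_fin: "f \<in> polys m \<Longrightarrow> finite {\<alpha>. f \<alpha> \<noteq> 0}"
  by (simp add: polys_def)

lemma peval_lin:
  assumes "f \<in> polys m" "g \<in> polys m"
  shows "peval m (\<lambda>\<alpha>. r * f \<alpha> + s * g \<alpha>) a = r * peval m f a + s * peval m g a"
proof -
  define F where "F = {\<alpha>. f \<alpha> \<noteq> 0} \<union> {\<alpha>. g \<alpha> \<noteq> 0}"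
  have fin: "finite F" using assms by (simp add: F_def polys_def)
  have "peval m (\<lambda>\<alpha>. r * f \<alpha> + s * g \<alpha>) a = (\<Sum>\<alpha>\<in>F. (r * f \<alpha> + s * g \<alpha>) * pmono m a \<alpha>)"
    by (rule peval_superset[OF fin]) (auto simp: F_def)
  also have "\<dots> = r * (\<Sum>\<alpha>\<in>F. f \<alpha> * pmono m a \<alpha>) + s * (\<Sum>\<alpha>\<in>F. g \<alpha> * pmono m a \<alpha>)"
    by (simp add: sum.distrib sum_distrib_left algebra_simps)
  also have "\<dots> = r * peval m f a + s * peval m g a"
    by (subst (1 2) peval_superset[OF fin]) (auto simp: F_def)
  finally show ?thesis .
qed

lemma polys_lin:
  fixes f g :: "(nat \<Rightarrow> nat) \<Rightarrow> 'a::comm_ring_1"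
  assumes "f \<in> polys m" "g \<in> polys m"
  shows "(\<lambda>\<alpha>. r * f \<alpha> + s * g \<alpha>) \<in> polys m"
proof -
  have "{\<alpha>. r * f \<alpha> + s * g \<alpha> \<noteq> 0} \<subseteq> {\<alpha>. f \<alpha> \<noteq> 0} \<union> {\<alpha>. g \<alpha> \<noteq> 0}" by auto
  then show ?thesis using assms unfolding polys_def by (auto intro: finite_subset)
qed

lemma polys_sum:
  fixes h :: "'b \<Rightarrow> (nat \<Rightarrow> nat) \<Rightarrow> 'a::comm_ring_1"
  assumes "finite T" "\<forall>\<mu>\<in>T. h \<mu> \<in> polys m"
  shows "(\<lambda>\<alpha>. \<Sum>\<mu>\<in>T. h \<mu> \<alpha>) \<in> polys m"
proof -
  have "{\<alpha>. (\<Sum>\<mu>\<in>T. h \<mu> \<alpha>) \<noteq> 0} \<subseteq> (\<Union>\<mu>\<in>T. {\<alpha>. h \<mu> \<alpha> \<noteq> 0})"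
    by (auto intro: ccontr)
  then show ?thesis using assms unfolding polys_def by (auto intro: finite_subset)
qed

lemma peval_sum:
  assumes "finite T" "\<forall>\<mu>\<in>T. h \<mu> \<in> polys m"
  shows "peval m (\<lambda>\<alpha>. \<Sum>\<mu>\<in>T. h \<mu> \<alpha>) a = (\<Sum>\<mu>\<in>T. peval m (h \<mu>) a)"
proof -
  define F where "F = (\<Union>\<mu>\<in>T. {\<alpha>. h \<mu> \<alpha> \<noteq> 0})"
  have fin: "finite F" using assms by (auto simp: F_def polys_def)
  have "peval m (\<lambda>\<alpha>. \<Sum>\<mu>\<in>T. h \<mu> \<alpha>) a = (\<Sum>\<alpha>\<in>F. (\<Sum>\<mu>\<in>T. h \<mu> \<alpha>) * pmono m a \<alpha>)"
    by (rule peval_superset[OF fin]) (auto simp: F_def intro: ccontr)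
  also have "\<dots> = (\<Sum>\<mu>\<in>T. \<Sum>\<alpha>\<in>F. h \<mu> \<alpha> * pmono m a \<alpha>)"
    by (simp add: sum_distrib_right sum.swap[of _ F])
  also have "\<dots> = (\<Sum>\<mu>\<in>T. peval m (h \<mu>) a)"
    by (rule sum.cong[OF refl], rule peval_superset[OF fin, symmetric]) (auto simp: F_def)
  finally show ?thesis .
qed

definition tens :: "'a::comm_ring_1 poly \<Rightarrow> ((nat \<Rightarrow> nat) \<Rightarrow> 'a) \<Rightarrow> (nat \<Rightarrow> nat) \<Rightarrow> 'a" where
  "tens P G \<alpha> = coeff P (\<alpha> 0) * G (pdrop \<alpha>)"

lemma tens_supp: "{\<alpha>. tens P G \<alpha> \<noteq> 0} \<subseteq> (\<lambda>(j, \<delta>). ccons j \<delta>) ` ({..degree P} \<times> {\<delta>. G \<delta> \<noteq> 0})"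
proof
  fix \<alpha> assume "\<alpha> \<in> {\<alpha>. tens P G \<alpha> \<noteq> 0}"
  then have "coeff P (\<alpha> 0) \<noteq> 0" "G (pdrop \<alpha>) \<noteq> 0" by (auto simp: tens_def)
  then have "\<alpha> 0 \<le> degree P" by (simp add: le_degree)
  then show "\<alpha> \<in> (\<lambda>(j, \<delta>). ccons j \<delta>) ` ({..degree P} \<times> {\<delta>. G \<delta> \<noteq> 0})"
    using \<open>G (pdrop \<alpha>) \<noteq> 0\<close> by (auto intro!: image_eqI[of _ _ "(\<alpha> 0, pdrop \<alpha>)"])
qed

lemma tens_polys:
  assumes "G \<in> polys m"
  shows "tens P G \<in> polys (Suc m)"
  unfolding polys_def
proof (intro CollectI conjI)
  show "finite {\<alpha>. tens P G \<alpha> \<noteq> 0}"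
    by (rule finite_subset[OF tens_supp]) (use assms in \<open>auto simp: polys_def\<close>)
  show "{\<alpha>. tens P G \<alpha> \<noteq> 0} \<subseteq> expn (Suc m)"
  proof
    fix \<alpha> assume "\<alpha> \<in> {\<alpha>. tens P G \<alpha> \<noteq> 0}"
    then have "G (pdrop \<alpha>) \<noteq> 0" by (auto simp: tens_def)
    then have "pdrop \<alpha> \<in> expn m" using assms by (auto simp: polys_def)
    then show "\<alpha> \<in> expn (Suc m)" by (simp add: expn_Suc)
  qed
qed

lemma peval_tens:
  assumes "G \<in> polys m"
  shows "peval (Suc m) (tens P G) (ccons x a) = poly P x * peval m G a"
proof -
  define S where "S = {..degree P} \<times> {\<delta>. G \<delta> \<noteq> 0}"
  have finS: "finite S" using assms by (auto simp: S_def polys_def)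
  have inj: "inj_on (\<lambda>(j, \<delta>). ccons j \<delta>) S"
    by (auto simp: inj_on_def ccons_inj)
  have "peval (Suc m) (tens P G) (ccons x a) =
     (\<Sum>\<alpha>\<in>(\<lambda>(j, \<delta>). ccons j \<delta>) ` S. tens P G \<alpha> * pmono (Suc m) (ccons x a) \<alpha>)"
    by (rule peval_superset) (use finS tens_supp S_def in auto)
  also have "\<dots> = (\<Sum>(j, \<delta>)\<in>S. (coeff P j * x ^ j) * (G \<delta> * pmono m a \<delta>))"
    by (subst sum.reindex[OF inj]) (auto simp: tens_def pmono_Suc intro!: sum.cong)
  also have "\<dots> = (\<Sum>j\<le>degree P. coeff P j * x ^ j) * (\<Sum>\<delta>\<in>{\<delta>. G \<delta> \<noteq> 0}. G \<delta> * pmono m a \<delta>)"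
    unfolding S_def by (simp add: sum_product sum.cartesian_product)
  also have "\<dots> = poly P x * peval m G a"
    by (simp add: poly_altdef peval_def pmono_def)
  finally show ?thesis .
qed

definition sord :: "'b set \<Rightarrow> ('b \<Rightarrow> 'b \<Rightarrow> bool) \<Rightarrow> bool" where
  "sord E lt \<longleftrightarrow> (\<forall>x\<in>E. \<not> lt x x) \<and> (\<forall>x\<in>E. \<forall>y\<in>E. \<forall>z\<in>E. lt x y \<longrightarrow> lt y z \<longrightarrow> lt x z)
     \<and> (\<forall>x\<in>E. \<forall>y\<in>E. x \<noteq> y \<longrightarrow> lt x y \<or> lt y x)"

lemma sord_irr: "sord E lt \<Longrightarrow> x \<in> E \<Longrightarrow> \<not> lt x x"
  unfolding sord_def by blast
lemma sord_trans: "sord E lt \<Longrightarrow> x \<in> E \<Longrightarrow> y \<in> E \<Longrightarrow> z \<in> E \<Longrightarrow> lt x y \<Longrightarrow> lt y z \<Longrightarrow> lt x z"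
  unfolding sord_def by blast
lemma sord_tot: "sord E lt \<Longrightarrow> x \<in> E \<Longrightarrow> y \<in> E \<Longrightarrow> x \<noteq> y \<Longrightarrow> lt x y \<or> lt y x"
  unfolding sord_def by blast

lemma sord_max:
  assumes "sord E lt" "finite S" "S \<noteq> {}" "S \<subseteq> E"
  shows "\<exists>x\<in>S. \<forall>y\<in>S. y = x \<or> lt y x"
  using assms(2,3,4)
proof (induction S rule: finite_ne_induct)
  case (singleton x) then show ?case by simp
next
  case (insert x F)
  then obtain m where m: "m \<in> F" "\<forall>y\<in>F. y = m \<or> lt y m" by auto
  have E: "x \<in> E" "m \<in> E" "F \<subseteq> E" using insert m by auto
  show ?case
  proof (cases "lt m x")
    case True
    have "\<forall>y\<in>insert x F. y = x \<or> lt y x"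
    proof
      fix y assume y: "y \<in> insert x F"
      show "y = x \<or> lt y x"
      proof (cases "y = x")
        case False
        then have "y \<in> F" using y by simp
        then have "y = m \<or> lt y m" using m by blast
        then show ?thesis
        proof
          assume "lt y m"
          then have "lt y x" using sord_trans[OF assms(1) _ E(2,1) _ True] \<open>y \<in> F\<close> E(3) by blast
          then show ?thesis by simp
        qed (use True in simp)
      qed simp
    qed
    then show ?thesis by blast
  next
    case False
    then have "x = m \<or> lt x m" using sord_tot[OF assms(1) E(1,2)] by blast
    then have "\<forall>y\<in>insert x F. y = m \<or> lt y m" using m by blast
    then show ?thesis using m by blast
  qed
qed

lemma LE_eq:
  assumes "sord E lt" "{\<alpha>. f \<alpha> \<noteq> 0} \<subseteq> E" "f \<beta> \<noteq> 0" "\<forall>\<alpha>. f \<alpha> \<noteq> 0 \<longrightarrow> \<alpha> = \<beta> \<or> lt \<alpha> \<beta>"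
  shows "LE lt f = \<beta>"
  unfolding LE_def
proof (rule the_equality)
  show "f \<beta> \<noteq> 0 \<and> (\<forall>\<gamma>. f \<gamma> \<noteq> 0 \<longrightarrow> \<gamma> = \<beta> \<or> lt \<gamma> \<beta>)" using assms(3,4) by blast
  fix x assume x: "f x \<noteq> 0 \<and> (\<forall>\<gamma>. f \<gamma> \<noteq> 0 \<longrightarrow> \<gamma> = x \<or> lt \<gamma> x)"
  show "x = \<beta>"
  proof (rule ccontr)
    assume ne: "x \<noteq> \<beta>"
    have "lt x \<beta>" using x assms(4) ne by blast
    moreover have "lt \<beta> x" using x assms(3) ne by blast
    moreover have "x \<in> E" "\<beta> \<in> E" using x assms(2,3) by auto
    ultimately show False using sord_trans[OF assms(1), of \<beta> x \<beta>] sord_irr[OF assms(1), of \<beta>] by blast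
  qed
qed

lemma LE_prop:
  assumes "sord E lt" "f \<in> polys m" "expn m \<subseteq> E" "f \<noteq> (\<lambda>_. 0)"
  shows "f (LE lt f) \<noteq> 0 \<and> (\<forall>\<beta>. f \<beta> \<noteq> 0 \<longrightarrow> \<beta> = LE lt f \<or> lt \<beta> (LE lt f))"
proof -
  have ne: "{\<alpha>. f \<alpha> \<noteq> 0} \<noteq> {}" using assms(4) by auto
  obtain x where x: "x \<in> {\<alpha>. f \<alpha> \<noteq> 0}" "\<forall>y\<in>{\<alpha>. f \<alpha> \<noteq> 0}. y = x \<or> lt y x"
    using sord_max[OF assms(1) polys_fin[OF assms(2)] ne] assms(2,3) unfolding polys_def by blast
  have "LE lt f = x"
    by (rule LE_eq[OF assms(1)]) (use x assms(2,3) in \<open>auto simp: polys_def\<close>)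
  then show ?thesis using x by auto
qed



lemma shift0_expn: "shift0 \<gamma> \<in> expn (Suc m) \<longleftrightarrow> \<gamma> \<in> expn m"
  by (simp add: shift0_ccons expn_Suc)

lemma po_sord:
  assumes "product_order (Suc m) lt"
  shows "sord (expn (Suc m)) lt"
  using assms unfolding product_order_def term_order_def sord_def by blast

lemma po_restr_sord:
  assumes "product_order (Suc m) lt"
  shows "sord (expn m) (restr_order lt)"
proof -
  have s: "sord (expn (Suc m)) lt" by (rule po_sord[OF assms])
  have inj: "shift0 x = shift0 y \<Longrightarrow> x = y" for x y by (simp add: shift0_ccons ccons_inj)
  show ?thesis unfolding sord_def restr_order_def
  proof (intro conjI ballI impI)
    fix x assume "x \<in> expn m" then show "\<not> lt (shift0 x) (shift0 x)"
      using sord_irr[OF s] shift0_expn by blast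
  next
    fix x y z assume "x \<in> expn m" "y \<in> expn m" "z \<in> expn m" "lt (shift0 x) (shift0 y)" "lt (shift0 y) (shift0 z)"
    then show "lt (shift0 x) (shift0 z)" using sord_trans[OF s] shift0_expn by blast
  next
    fix x y assume "x \<in> expn m" "y \<in> expn m" "x \<noteq> y"
    then show "lt (shift0 x) (shift0 y) \<or> lt (shift0 y) (shift0 x)"
      using sord_tot[OF s] shift0_expn inj by metis
  qed
qed

lemma po_char:
  assumes "product_order (Suc m) lt" "\<alpha> \<in> expn (Suc m)" "\<beta> \<in> expn (Suc m)"
  shows "lt \<alpha> \<beta> \<longleftrightarrow> (restr_order lt (pdrop \<alpha>) (pdrop \<beta>) \<or> (pdrop \<alpha> = pdrop \<beta> \<and> \<alpha> 0 < \<beta> 0))"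
  using assms unfolding product_order_def by blast

lemma dir1:
  fixes A :: "(nat \<Rightarrow> 'a::field) set" and f :: "(nat \<Rightarrow> nat) \<Rightarrow> 'a"
  assumes po: "product_order (Suc m) lt" and fI: "f \<in> vanishing_ideal (Suc m) A" and f0: "f \<noteq> (\<lambda>_. 0)"
  shows "card {c \<in> {a 0 | a. a \<in> A}. pdrop (LE lt f) \<in> Dset m (restr_order lt) {pdrop a | a. a \<in> A \<and> a 0 = c}} \<le> LE lt f 0"
proof -
  define \<beta> where "\<beta> = LE lt f"
  define \<gamma> where "\<gamma> = pdrop \<beta>"
  define F where "F = {\<alpha>. f \<alpha> \<noteq> 0}"
  have fp: "f \<in> polys (Suc m)" using fI by (simp add: vanishing_ideal_def)
  have finF: "finite F" using fp by (simp add: F_def polys_def)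
  have FE: "F \<subseteq> expn (Suc m)" using fp by (simp add: F_def polys_def)
  have so: "sord (expn (Suc m)) lt" by (rule po_sord[OF po])
  have rso: "sord (expn m) (restr_order lt)" by (rule po_restr_sord[OF po])
  have LP: "f \<beta> \<noteq> 0" "\<forall>\<alpha>. f \<alpha> \<noteq> 0 \<longrightarrow> \<alpha> = \<beta> \<or> lt \<alpha> \<beta>"
    using LE_prop[OF so fp subset_refl f0] unfolding \<beta>_def by blast+
  have \<beta>E: "\<beta> \<in> expn (Suc m)" using LP(1) FE F_def by blast
  have \<gamma>E: "\<gamma> \<in> expn m" using \<beta>E by (simp add: \<gamma>_def expn_Suc)
  have below: "\<alpha> \<in> F \<Longrightarrow> pdrop \<alpha> = pdrop \<beta> \<or> restr_order lt (pdrop \<alpha>) (pdrop \<beta>)" for \<alpha>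
  proof -
    assume "\<alpha> \<in> F"
    then have "\<alpha> = \<beta> \<or> lt \<alpha> \<beta>" "\<alpha> \<in> expn (Suc m)" using LP FE F_def by auto
    then show ?thesis using po_char[OF po _ \<beta>E] by auto
  qed
  have below0: "\<alpha> \<in> F \<Longrightarrow> pdrop \<alpha> = \<gamma> \<Longrightarrow> \<alpha> 0 \<le> \<beta> 0" for \<alpha>
  proof -
    assume a: "\<alpha> \<in> F" "pdrop \<alpha> = \<gamma>"
    then have "\<alpha> = \<beta> \<or> lt \<alpha> \<beta>" "\<alpha> \<in> expn (Suc m)" using LP FE F_def by auto
    moreover have "\<not> restr_order lt \<gamma> \<gamma>" using sord_irr[OF rso \<gamma>E] .
    ultimately show ?thesis using po_char[OF po _ \<beta>E] a(2) \<gamma>_def by fastforce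
  qed
  define gc where "gc c \<delta> = (\<Sum>\<alpha>\<in>{\<alpha>\<in>F. pdrop \<alpha> = \<delta>}. f \<alpha> * c ^ \<alpha> 0)" for c :: 'a and \<delta>
  define pp where "pp = (\<Sum>\<alpha>\<in>{\<alpha>\<in>F. pdrop \<alpha> = \<gamma>}. monom (f \<alpha>) (\<alpha> 0))"
  have poly_pp: "poly pp c = gc c \<gamma>" for c
    by (simp add: pp_def gc_def poly_sum poly_monom)
  have coeff_pp: "coeff pp k = (\<Sum>\<alpha>\<in>{\<alpha>\<in>F. pdrop \<alpha> = \<gamma>}. if \<alpha> 0 = k then f \<alpha> else 0)" for k
    by (simp add: pp_def coeff_sum coeff_monom)
  have "coeff pp (\<beta> 0) = (\<Sum>\<alpha>\<in>{\<alpha>\<in>F. pdrop \<alpha> = \<gamma>}. if \<alpha> = \<beta> then f \<alpha> else 0)"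
    unfolding coeff_pp
  proof (rule sum.cong[OF refl])
    fix \<alpha> assume "\<alpha> \<in> {\<alpha>\<in>F. pdrop \<alpha> = \<gamma>}"
    then have "pdrop \<alpha> = pdrop \<beta>" by (simp add: \<gamma>_def)
    then have "(\<alpha> 0 = \<beta> 0) = (\<alpha> = \<beta>)" using ccons_eq_iff[of \<alpha> "\<beta> 0" "pdrop \<beta>"] by auto
    then show "(if \<alpha> 0 = \<beta> 0 then f \<alpha> else 0) = (if \<alpha> = \<beta> then f \<alpha> else 0)" by simp
  qed
  also have "\<dots> = f \<beta>" using finF LP(1) by (simp add: F_def \<gamma>_def)
  finally have cpb: "coeff pp (\<beta> 0) \<noteq> 0" using LP(1) by simp
  then have pp0: "pp \<noteq> 0" by auto
  have "degree pp \<le> \<beta> 0"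
  proof (rule degree_le, intro allI impI)
    fix i assume "\<beta> 0 < i"
    then show "coeff pp i = 0" unfolding coeff_pp
      by (intro sum.neutral) (use below0 in fastforce)
  qed
  define S where "S = {c \<in> {a 0 | a. a \<in> A}. pdrop (LE lt f) \<in> Dset m (restr_order lt) {pdrop a | a. a \<in> A \<and> a 0 = c}}"
  have gc_ex: "\<exists>\<alpha>\<in>F. pdrop \<alpha> = \<delta>" if "gc c \<delta> \<noteq> 0" for c \<delta>
  proof (rule ccontr)
    assume "\<not> (\<exists>\<alpha>\<in>F. pdrop \<alpha> = \<delta>)"
    then have "{\<alpha>\<in>F. pdrop \<alpha> = \<delta>} = {}" by blast
    then have "gc c \<delta> = 0" unfolding gc_def by (metis sum.empty)
    then show False using that by simp
  qed
  have gc_sub: "{\<delta>. gc c \<delta> \<noteq> 0} \<subseteq> pdrop ` F" for c using gc_ex by blast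
  have gc_poly: "gc c \<in> polys m" for c
  proof -
    have "{\<delta>. gc c \<delta> \<noteq> 0} \<subseteq> pdrop ` F" by (rule gc_sub)
    moreover have "pdrop ` F \<subseteq> expn m" using FE by (auto simp: expn_Suc)
    ultimately show ?thesis using finF unfolding polys_def by (auto intro: finite_subset)
  qed
  have gc_eval: "peval m (gc c) a' = peval (Suc m) f (ccons c a')" for c a'
  proof -
    have "peval m (gc c) a' = (\<Sum>\<delta>\<in>pdrop ` F. gc c \<delta> * pmono m a' \<delta>)"
      by (rule peval_superset) (use finF gc_sub in auto)
    also have "\<dots> = (\<Sum>\<delta>\<in>pdrop ` F. \<Sum>\<alpha>\<in>{\<alpha>\<in>F. pdrop \<alpha> = \<delta>}. f \<alpha> * pmono (Suc m) (ccons c a') \<alpha>)"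
      by (rule sum.cong[OF refl]) (auto simp: gc_def sum_distrib_right pmono_Suc intro!: sum.cong)
    also have "\<dots> = (\<Sum>\<alpha>\<in>F. f \<alpha> * pmono (Suc m) (ccons c a') \<alpha>)"
      by (rule sum.group) (use finF in auto)
    also have "\<dots> = peval (Suc m) f (ccons c a')"
      by (rule peval_superset[symmetric]) (use finF F_def in auto)
    finally show ?thesis .
  qed
  have vanish: "gc c \<gamma> = 0" if cS: "c \<in> S" for c
  proof (rule ccontr)
    assume nz: "gc c \<gamma> \<noteq> 0"
    define Ac where "Ac = {pdrop a | a. a \<in> A \<and> a 0 = c}"
    have "gc c \<in> vanishing_ideal m Ac"
      unfolding vanishing_ideal_def
    proof (intro CollectI conjI ballI)
      show "gc c \<in> polys m" by (rule gc_poly)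
      fix a' assume "a' \<in> Ac"
      then obtain a where a: "a \<in> A" "a 0 = c" "a' = pdrop a" by (auto simp: Ac_def)
      then have "ccons c a' = a" by (metis ccons_pdrop)
      then show "peval m (gc c) a' = 0" using gc_eval fI a(1) by (simp add: vanishing_ideal_def)
    qed
    moreover have "gc c \<noteq> (\<lambda>_. 0)"
    proof
      assume "gc c = (\<lambda>_. 0)" then show False using nz by simp
    qed
    moreover have "LE (restr_order lt) (gc c) = \<gamma>"
    proof (rule LE_eq[OF rso])
      show "{\<alpha>. gc c \<alpha> \<noteq> 0} \<subseteq> expn m" using gc_poly by (simp add: polys_def)
      show "gc c \<gamma> \<noteq> 0" by (rule nz)
      show "\<forall>\<alpha>. gc c \<alpha> \<noteq> 0 \<longrightarrow> \<alpha> = \<gamma> \<or> restr_order lt \<alpha> \<gamma>"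
      proof (intro allI impI)
        fix \<delta> assume "gc c \<delta> \<noteq> 0"
        then obtain \<alpha> where "\<alpha> \<in> F" "pdrop \<alpha> = \<delta>" using gc_ex by blast
        then show "\<delta> = \<gamma> \<or> restr_order lt \<delta> \<gamma>" using below \<gamma>_def by blast
      qed
    qed
    ultimately have "\<gamma> \<in> Cset m (restr_order lt) Ac" unfolding Cset_def by blast
    moreover have "\<gamma> \<in> Dset m (restr_order lt) Ac" using cS by (simp add: S_def Ac_def \<gamma>_def \<beta>_def)
    ultimately show False by (simp add: Dset_def)
  qed
  have "S \<subseteq> {x. poly pp x = 0}" using vanish poly_pp by auto
  then have "card S \<le> card {x. poly pp x = 0}"
    by (rule card_mono[OF poly_roots_finite[OF pp0]])
  also have "\<dots> \<le> degree pp" by (rule card_poly_roots_bound[OF pp0])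
  also have "\<dots> \<le> \<beta> 0" by fact
  finally show ?thesis by (simp add: S_def \<beta>_def)
qed


lemma dir2:
  fixes A :: "(nat \<Rightarrow> 'a::field) set"
  assumes po: "product_order (Suc m) lt"
    and finY: "finite {a 0 | a. a \<in> A}"
    and \<beta>E: "\<beta> \<in> expn (Suc m)"
    and cardS: "card {c \<in> {a 0 | a. a \<in> A}. pdrop \<beta> \<in> Dset m (restr_order lt) {pdrop a | a. a \<in> A \<and> a 0 = c}} \<le> \<beta> 0"
  shows "\<beta> \<in> Cset (Suc m) lt A"
proof -
  define Y where "Y = {a 0 | a. a \<in> A}"
  define Ac where "Ac c = {pdrop a | a. a \<in> A \<and> a 0 = c}" for c
  define \<gamma> where "\<gamma> = pdrop \<beta>"
  define S where "S = {c \<in> Y. \<gamma> \<in> Dset m (restr_order lt) (Ac c)}"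
  define T where "T = Y - S"
  have finS: "finite S" using finY by (simp add: S_def Y_def)
  have finT: "finite T" using finY by (simp add: T_def Y_def)
  have cS: "card S \<le> \<beta> 0" using cardS by (simp add: S_def Y_def Ac_def \<gamma>_def)
  have \<gamma>E: "\<gamma> \<in> expn m" using \<beta>E by (simp add: \<gamma>_def expn_Suc)
  have so: "sord (expn (Suc m)) lt" by (rule po_sord[OF po])
  have rso: "sord (expn m) (restr_order lt)" by (rule po_restr_sord[OF po])
  have "\<forall>\<mu>\<in>T. \<exists>g. g \<in> vanishing_ideal m (Ac \<mu>) \<and> g \<noteq> (\<lambda>_. 0) \<and> LE (restr_order lt) g = \<gamma>"
  proof
    fix \<mu> assume "\<mu> \<in> T"
    then have "\<gamma> \<notin> Dset m (restr_order lt) (Ac \<mu>)" by (simp add: T_def S_def)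
    then have "\<gamma> \<in> Cset m (restr_order lt) (Ac \<mu>)" using \<gamma>E by (simp add: Dset_def)
    then show "\<exists>g. g \<in> vanishing_ideal m (Ac \<mu>) \<and> g \<noteq> (\<lambda>_. 0) \<and> LE (restr_order lt) g = \<gamma>"
      unfolding Cset_def by blast
  qed
  then obtain g where g: "\<And>\<mu>. \<mu> \<in> T \<Longrightarrow> g \<mu> \<in> vanishing_ideal m (Ac \<mu>) \<and> g \<mu> \<noteq> (\<lambda>_. 0) \<and> LE (restr_order lt) (g \<mu>) = \<gamma>"
    by metis
  have gpoly: "g \<mu> \<in> polys m" if "\<mu> \<in> T" for \<mu> using g[OF that] by (simp add: vanishing_ideal_def)
  have gvan: "peval m (g \<mu>) a' = 0" if "\<mu> \<in> T" "a' \<in> Ac \<mu>" for \<mu> a'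
    using g[OF that(1)] that(2) by (simp add: vanishing_ideal_def)
  have gLE: "g \<mu> \<gamma> \<noteq> 0 \<and> (\<forall>\<delta>. g \<mu> \<delta> \<noteq> 0 \<longrightarrow> \<delta> = \<gamma> \<or> restr_order lt \<delta> \<gamma>)" if "\<mu> \<in> T" for \<mu>
    using LE_prop[OF rso gpoly[OF that] subset_refl] g[OF that] by metis
  define e where "e = (\<lambda>\<delta>. if \<delta> = \<gamma> then 1 else (0::'a))"
  have epoly: "e \<in> polys m"
  proof -
    have "{\<delta>. e \<delta> \<noteq> 0} = {\<gamma>}" by (auto simp: e_def)
    then show ?thesis using \<gamma>E by (simp add: polys_def)
  qed
  have eeval: "peval m e a' = pmono m a' \<gamma>" for a'
    by (subst peval_superset[of "{\<gamma>}"]) (auto simp: e_def)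
  define G where "G \<mu> = (\<lambda>\<delta>. (1 / g \<mu> \<gamma>) * g \<mu> \<delta> + (-1) * e \<delta>)" for \<mu>
  have Gpoly: "G \<mu> \<in> polys m" if "\<mu> \<in> T" for \<mu>
    unfolding G_def by (rule polys_lin[OF gpoly[OF that] epoly])
  have G\<gamma>: "G \<mu> \<gamma> = 0" if "\<mu> \<in> T" for \<mu> using gLE[OF that] by (simp add: G_def e_def)
  have Gnz: "\<delta> \<noteq> \<gamma> \<and> restr_order lt \<delta> \<gamma>" if "\<mu> \<in> T" "G \<mu> \<delta> \<noteq> 0" for \<mu> \<delta>
  proof -
    have "\<delta> \<noteq> \<gamma>" using that G\<gamma> by auto
    then have "g \<mu> \<delta> \<noteq> 0" using that(2) by (auto simp: G_def e_def)
    then show ?thesis using gLE[OF that(1)] \<open>\<delta> \<noteq> \<gamma>\<close> by blast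
  qed
  define Pq where "Pq = (\<Prod>\<mu>\<in>S. [:-\<mu>, 1:])"
  define q where "q = monom 1 (\<beta> 0 - card S) * Pq"
  define L where "L \<mu> = smult (1 / (\<Prod>\<nu>\<in>T - {\<mu>}. (\<mu> - \<nu>))) (\<Prod>\<nu>\<in>T - {\<mu>}. [:-\<nu>, 1:])" for \<mu>
  have Pq0: "Pq \<noteq> 0" unfolding Pq_def using finS by (simp add: prod_zero_iff)
  have dPq: "degree Pq = card S" unfolding Pq_def
    by (subst degree_prod_eq_sum_degree) auto
  have q0: "q \<noteq> 0" using Pq0 by (simp add: q_def)
  have dq: "degree q = \<beta> 0" unfolding q_def using Pq0 dPq cS
    by (simp add: degree_mult_eq degree_monom_eq)
  have cq: "coeff q (\<beta> 0) \<noteq> 0" using q0 dq leading_coeff_neq_0 by metis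
  have polyq: "poly q c = 0" if "c \<in> S" for c
  proof -
    have "poly Pq c = (\<Prod>\<mu>\<in>S. c - \<mu>)" by (simp add: Pq_def poly_prod)
    also have "\<dots> = 0" using that finS by (simp add: prod_zero_iff)
    finally show ?thesis by (simp add: q_def)
  qed
  have polyL: "poly (L \<mu>) c = (if \<mu> = c then 1 else 0)" if "\<mu> \<in> T" "c \<in> T" for \<mu> c
  proof -
    have pl: "poly (L \<mu>) c = (1 / (\<Prod>\<nu>\<in>T - {\<mu>}. (\<mu> - \<nu>))) * (\<Prod>\<nu>\<in>T - {\<mu>}. (c - \<nu>))"
      by (simp add: L_def poly_prod)
    show ?thesis
    proof (cases "\<mu> = c")
      case True
      have "(\<Prod>\<nu>\<in>T - {\<mu>}. (\<mu> - \<nu>)) \<noteq> 0" using finT by (simp add: prod_zero_iff)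
      then show ?thesis using pl True by simp
    next
      case False
      have "(\<Prod>\<nu>\<in>T - {\<mu>}. (c - \<nu>)) = 0" using finT False that(2) by (simp add: prod_zero_iff)
      then show ?thesis using pl False by simp
    qed
  qed
  define f where "f = (\<lambda>\<alpha>. 1 * tens q e \<alpha> + 1 * (\<Sum>\<mu>\<in>T. tens (q * L \<mu>) (G \<mu>) \<alpha>))"
  have tp1: "tens q e \<in> polys (Suc m)" by (rule tens_polys[OF epoly])
  have tp2: "\<forall>\<mu>\<in>T. tens (q * L \<mu>) (G \<mu>) \<in> polys (Suc m)" using tens_polys Gpoly by blast
  have sp: "(\<lambda>\<alpha>. \<Sum>\<mu>\<in>T. tens (q * L \<mu>) (G \<mu>) \<alpha>) \<in> polys (Suc m)" by (rule polys_sum[OF finT tp2])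
  have fpoly: "f \<in> polys (Suc m)" unfolding f_def by (rule polys_lin[OF tp1 sp])
  have feval: "peval (Suc m) f (ccons c a') = poly q c * pmono m a' \<gamma> + (\<Sum>\<mu>\<in>T. poly q c * poly (L \<mu>) c * peval m (G \<mu>) a')" for c a'
    unfolding f_def
    by (subst peval_lin[OF tp1 sp]) (simp add: peval_sum[OF finT tp2] peval_tens[OF epoly] peval_tens[OF Gpoly] eeval)
  have fI: "f \<in> vanishing_ideal (Suc m) A"
    unfolding vanishing_ideal_def
  proof (intro CollectI conjI ballI fpoly)
    fix a assume aA: "a \<in> A"
    define c where "c = a 0"
    define a' where "a' = pdrop a"
    have a: "a = ccons c a'" by (simp add: c_def a'_def)
    have cY: "c \<in> Y" using aA by (auto simp: Y_def c_def)
    have a'A: "a' \<in> Ac c" using aA by (auto simp: Ac_def c_def a'_def)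
    show "peval (Suc m) f a = 0"
    proof (cases "c \<in> S")
      case True
      then show ?thesis using a feval polyq by simp
    next
      case False
      then have cT: "c \<in> T" using cY by (simp add: T_def)
      have "(\<Sum>\<mu>\<in>T. poly q c * poly (L \<mu>) c * peval m (G \<mu>) a') = (\<Sum>\<mu>\<in>T. if \<mu> = c then poly q c * peval m (G c) a' else 0)"
        by (rule sum.cong[OF refl]) (use polyL cT in auto)
      also have "\<dots> = poly q c * peval m (G c) a'" using finT cT by (simp add: sum.delta)
      also have "peval m (G c) a' = (1 / g c \<gamma>) * peval m (g c) a' + (-1) * peval m e a'"
        unfolding G_def by (rule peval_lin[OF gpoly[OF cT] epoly])
      also have "\<dots> = - pmono m a' \<gamma>" using gvan[OF cT a'A] eeval by simp
      finally show ?thesis using a feval by simp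
    qed
  qed
  have fne: "f \<beta> \<noteq> 0"
  proof -
    have "f \<beta> = coeff q (\<beta> 0)" using G\<gamma> by (simp add: f_def tens_def e_def \<gamma>_def)
    then show ?thesis using cq by simp
  qed
  have f0: "f \<noteq> (\<lambda>_. 0)" using fne by auto
  have fE: "{\<alpha>. f \<alpha> \<noteq> 0} \<subseteq> expn (Suc m)" using fpoly by (simp add: polys_def)
  have "LE lt f = \<beta>"
  proof (rule LE_eq[OF so fE fne], intro allI impI)
    fix \<alpha> assume fa: "f \<alpha> \<noteq> 0"
    have \<alpha>E: "\<alpha> \<in> expn (Suc m)" using fE fa by blast
    show "\<alpha> = \<beta> \<or> lt \<alpha> \<beta>"
    proof (cases "tens q e \<alpha> = 0")
      case False
      then have c: "coeff q (\<alpha> 0) \<noteq> 0" "pdrop \<alpha> = \<gamma>" by (auto simp: tens_def e_def split: if_splits)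
      then have "\<alpha> 0 \<le> \<beta> 0" using le_degree dq by metis
      show ?thesis
      proof (cases "\<alpha> 0 = \<beta> 0")
        case True
        then have "\<alpha> = \<beta>" using c(2) ccons_eq_iff[of \<alpha> "\<beta> 0" "pdrop \<beta>"] by (simp add: \<gamma>_def)
        then show ?thesis by simp
      next
        case False
        then have "\<alpha> 0 < \<beta> 0" using \<open>\<alpha> 0 \<le> \<beta> 0\<close> by simp
        then show ?thesis using po_char[OF po \<alpha>E \<beta>E] c(2) \<gamma>_def by simp
      qed
    next
      case True
      then have "(\<Sum>\<mu>\<in>T. tens (q * L \<mu>) (G \<mu>) \<alpha>) \<noteq> 0" using fa by (simp add: f_def)
      then obtain \<mu> where \<mu>: "\<mu> \<in> T" "tens (q * L \<mu>) (G \<mu>) \<alpha> \<noteq> 0" by (meson sum.neutral)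
      then have "G \<mu> (pdrop \<alpha>) \<noteq> 0" by (auto simp: tens_def)
      then have "restr_order lt (pdrop \<alpha>) \<gamma>" using Gnz[OF \<mu>(1)] by blast
      then show ?thesis using po_char[OF po \<alpha>E \<beta>E] \<gamma>_def by simp
    qed
  qed
  then show ?thesis unfolding Cset_def using fI f0 by blast
qed



theorem mainTheorem5:
  fixes lt :: "(nat \<Rightarrow> nat) \<Rightarrow> (nat \<Rightarrow> nat) \<Rightarrow> bool"
    and \<P> :: "(nat \<Rightarrow> 'a::field) set set"
    and A :: "(nat \<Rightarrow> 'a) set"
    and n d :: nat
  assumes "infinite (UNIV :: 'a set)"
    and "n \<ge> 2"
    and "product_order n lt"
    and "\<forall>i. Suc i < n \<longrightarrow> lt (unitv i) (unitv (Suc i))"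
    and "finite \<P>"
    and "\<forall>P\<in>\<P>. affine_plane n d P"
    and "A = \<Union>\<P>"
    and "\<forall>P\<in>\<P>. \<forall>J. minimal_free_vars n d P J \<longrightarrow> 0 \<notin> J"
  shows "Dset n lt A =
    {\<beta> \<in> expn n. \<beta> 0 < card {c \<in> {a 0 | a. a \<in> A}.
        pdrop \<beta> \<in> Dset (n - 1) (restr_order lt) {pdrop a | a. a \<in> A \<and> a 0 = c}}}"
proof -
  obtain m where nm: "n = Suc m" using assms(2) by (metis Suc_le_D numeral_2_eq_2 Suc_leD)
  have po: "product_order (Suc m) lt" using assms(3) nm by simp
  have Yeq: "{a 0 | a. a \<in> A} = (\<Union>P\<in>\<P>. (\<lambda>a. a 0) ` P)" using assms(7) by auto
  have finY: "finite {a 0 | a. a \<in> A}"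
    unfolding Yeq
  proof (rule finite_UN_I[OF assms(5)])
    fix P assume "P \<in> \<P>"
    then obtain c where "\<forall>a\<in>P. a 0 = c" using plane_const assms(6,8) by blast
    then have "(\<lambda>a. a 0) ` P \<subseteq> {c}" by auto
    then show "finite ((\<lambda>a. a 0) ` P)" using finite_subset by blast
  qed
  show ?thesis
    unfolding nm diff_Suc_1
  proof (rule set_eqI, rule iffI)
    fix \<beta> assume b: "\<beta> \<in> Dset (Suc m) lt A"
    then have bE: "\<beta> \<in> expn (Suc m)" and bC: "\<beta> \<notin> Cset (Suc m) lt A" by (auto simp: Dset_def)
    have "\<beta> 0 < card {c \<in> {a 0 | a. a \<in> A}. pdrop \<beta> \<in> Dset m (restr_order lt) {pdrop a | a. a \<in> A \<and> a 0 = c}}"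
    proof (rule ccontr)
      assume "\<not> ?thesis"
      then have "\<beta> \<in> Cset (Suc m) lt A" by (intro dir2[OF po finY bE]) simp
      then show False using bC by simp
    qed
    then show "\<beta> \<in> {\<beta> \<in> expn (Suc m). \<beta> 0 < card {c \<in> {a 0 | a. a \<in> A}. pdrop \<beta> \<in> Dset m (restr_order lt) {pdrop a | a. a \<in> A \<and> a 0 = c}}}"
      using bE by simp
  next
    fix \<beta> assume "\<beta> \<in> {\<beta> \<in> expn (Suc m). \<beta> 0 < card {c \<in> {a 0 | a. a \<in> A}. pdrop \<beta> \<in> Dset m (restr_order lt) {pdrop a | a. a \<in> A \<and> a 0 = c}}}"
    then have bE: "\<beta> \<in> expn (Suc m)" and lt0: "\<beta> 0 < card {c \<in> {a 0 | a. a \<in> A}. pdrop \<beta> \<in> Dset m (restr_order lt) {pdrop a | a. a \<in> A \<and> a 0 = c}}"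
      by auto
    have "\<beta> \<notin> Cset (Suc m) lt A"
    proof
      assume "\<beta> \<in> Cset (Suc m) lt A"
      then obtain f where f: "f \<in> vanishing_ideal (Suc m) A" "f \<noteq> (\<lambda>_. 0)" "\<beta> = LE lt f"
        unfolding Cset_def by blast
      show False using dir1[OF po f(1,2)] f(3) lt0 by simp
    qed
    then show "\<beta> \<in> Dset (Suc m) lt A" using bE by (simp add: Dset_def)
  qed
qed


end
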